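(* Let $\mathscr T$ be a functor satisfying (T1)–(T4) and let $\mathfrak K=(K,\bigsqcup,\odot,{}^*,{\sim},e)$ be a $\mathscr T$-based orthomodular dynamic algebra. Then for each $k\in K$ there exists a unique subset $S\subseteq\mathscr T(K)$ with $k=\bigsqcup S$.
   Context: An involutive unital quantale is $(Q,\bigsqcup,\odot,{}^*,e)$: $Q$ a complete join-semilattice, $\odot$ associative and distributing over arbitrary joins in each argument, $e$ a unit, ${}^*$ with $x^{**}=x$, $(x\odot y)^*=y^*\odot x^*$, $(\bigsqcup x_i)^*=\bigsqcup x_i^*$. An involutive generalized dynamic algebra (IDA) is such a quantale with ${\sim}\colon K\to K$ satisfying, for all $x,y$ and families $(x_i)$: ${\sim}(x\odot{\sim}{\sim}y)={\sim}(x\odot y)$; ${\sim}(\bigsqcup{\sim}{\sim}x_i)={\sim}(\bigsqcup x_i)$; $({\sim}x)^*={\sim}x$; ${\sim}{\sim}({\sim}{\sim}x\odot y)={\sim}({\sim}x\sqcup{\sim}({\sim}x\sqcup y))$. Test set $\widetilde K=\{{\sim}k\}$; $\bigvee W={\sim}{\sim}\bigsqcup W$; $w^\perp={\sim}w$; $k\preceq l$ iff $\bigvee\{k,l\}=l$; $k\bullet v={\sim}{\sim}(k\odot v)$; $k\equiv l$ iff $k\bullet w=l\bullet w$ for all $w\in\widetilde K$. IDA morphisms preserve joins, $\odot$, ${}^*$, unit, ${\sim}$ (category $\mathbb{IDA}$); semi-Foulis means $(\widetilde K,\preceq,{}^\perp)$ is a complete orthomodular lattice. $\mathbb{IM}$: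 involutive monoids and their homomorphisms. For a complete orthomodular lattice $\mathcal M$: $\pi_m(x)=m\wedge(m^\perp\vee x)$; $\mathbf{Lin}(\mathcal M)$ is the set of maps $f$ admitting $f^*$ with $f(x)\le y^\perp\iff x\le f^*(y)^\perp$, an IDA under pointwise joins, composition, ${}^*$, $\mathrm{id}$ and ${\sim}f=\pi_{f(1)^\perp}$; for an involutive submonoid $L\supseteq\{\pi_m\}$, $\mathscr P(L)$ is the IDA of subsets of $L$ with union, setwise composition and involution, unit $\{\mathrm{id}\}$, ${\sim}A=\{\pi_{(\bigvee_{a\in A}a(1))^\perp}\}$. $\mathscr T\colon\mathbb{IDA}\to\mathbb{IM}$ satisfies: (T1) $\widetilde K\subseteq\mathscr T(K)\subseteq K$ and $\mathscr T(K)$ is an involutive submonoid of $(K,\odot,{}^*,e)$; (T2) for semi-Foulis $\mathfrak K$ with $s=t\iff s\equiv t$ on $\mathscr T(K)$, $k\mapsto k\bullet(-)$ is an isomorphism $\mathscr T(\mathfrak K)\to\mathscr T(\mathbf{Lin}(\widetilde{\mathfrak K}))$; (T3) $f\mapsto\{f\}$ is an isomorphism $\mathscr T(\mathbf{Lin}(\mathcal M))\to\mathscr T(\mathscr P(\mathscr T(\mathbf{Lin}(\mathcal M))))$; (T4) $\mathscr T(f)$ is the restriction of $f$. A $\mathscr T$-based orthomodular dynamic algebra is an IDA with: (TODA1) $(\widetilde K,\preceq,{}^\perp)$ a complete orthomodular lattice; (TODA2) every $A$ with $\mathscr T(K)\subseteq A\subseteq K$ closed under $\odot$, ${}^*$,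 arbitrary joins equals $K$; (TODA3) for $S,T\subseteq\mathscr T(K)$, $\bigsqcup S=\bigsqcup T$ iff $S=T$; (TODA4) for $s,t\in\mathscr T(K)$, $s=t$ iff $s\equiv t$. *)

theory Defs
  imports Main
begin

text \<open>An IDA-structure on elements of type 'a: carrier, arbitrary join, multiplication,
  involution, the operation sim (written neg), and the unit.\<close>
record 'a ida_struct =
  carrier :: "'a set"
  Join :: "'a set \<Rightarrow> 'a"
  mult :: "'a \<Rightarrow> 'a \<Rightarrow> 'a"
  star :: "'a \<Rightarrow> 'a"
  neg :: "'a \<Rightarrow> 'a"
  unit :: "'a"

definition qle :: "('a, 'b) ida_struct_scheme \<Rightarrow> 'a \<Rightarrow> 'a \<Rightarrow> bool" where
  "qle K x y \<longleftrightarrow> Join K {x, y} = y"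

definition is_lub :: "'a set \<Rightarrow> ('a \<Rightarrow> 'a \<Rightarrow> bool) \<Rightarrow> 'a set \<Rightarrow> 'a \<Rightarrow> bool" where
  "is_lub X le W u \<longleftrightarrow> u \<in> X \<and> (\<forall>w\<in>W. le w u) \<and> (\<forall>z\<in>X. (\<forall>w\<in>W. le w z) \<longrightarrow> le u z)"

definition is_glb :: "'a set \<Rightarrow> ('a \<Rightarrow> 'a \<Rightarrow> bool) \<Rightarrow> 'a set \<Rightarrow> 'a \<Rightarrow> bool" where
  "is_glb X le W u \<longleftrightarrow> u \<in> X \<and> (\<forall>w\<in>W. le u w) \<and> (\<forall>z\<in>X. (\<forall>w\<in>W. le z w) \<longrightarrow> le z u)"

definition partial_order_on' :: "'a set \<Rightarrow> ('a \<Rightarrow> 'a \<Rightarrow> bool) \<Rightarrow> bool" where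
  "partial_order_on' X le \<longleftrightarrow>
     (\<forall>x\<in>X. le x x) \<and>
     (\<forall>x\<in>X. \<forall>y\<in>X. le x y \<and> le y x \<longrightarrow> x = y) \<and>
     (\<forall>x\<in>X. \<forall>y\<in>X. \<forall>z\<in>X. le x y \<and> le y z \<longrightarrow> le x z)"

definition complete_oml :: "'a set \<Rightarrow> ('a \<Rightarrow> 'a \<Rightarrow> bool) \<Rightarrow> ('a \<Rightarrow> 'a) \<Rightarrow> bool" where
  "complete_oml X le perp \<longleftrightarrow>
     partial_order_on' X le \<and>
     (\<forall>W\<subseteq>X. \<exists>u. is_lub X le W u) \<and>
     (\<forall>x\<in>X. perp x \<in> X) \<and>
     (\<forall>x\<in>X. perp (perp x) = x) \<and>
     (\<forall>x\<in>X. \<forall>y\<in>X. le x y \<longrightarrow> le (perp y) (perp x)) \<and>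
     (\<forall>x\<in>X. \<forall>b. is_glb X le {x, perp x} b \<longrightarrow> (\<forall>z\<in>X. le b z)) \<and>
     (\<forall>x\<in>X. \<forall>y\<in>X. le x y \<longrightarrow>
        (\<forall>m j. is_glb X le {y, perp x} m \<longrightarrow> is_lub X le {x, m} j \<longrightarrow> j = y))"

definition inv_quantale :: "('a, 'b) ida_struct_scheme \<Rightarrow> bool" where
  "inv_quantale K \<longleftrightarrow>
     partial_order_on' (carrier K) (qle K) \<and>
     (\<forall>S\<subseteq>carrier K. is_lub (carrier K) (qle K) S (Join K S)) \<and>
     (\<forall>x\<in>carrier K. \<forall>y\<in>carrier K. mult K x y \<in> carrier K) \<and>
     (\<forall>x\<in>carrier K. \<forall>y\<in>carrier K. \<forall>z\<in>carrier K. mult K (mult K x y) z = mult K x (mult K y z)) \<and>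
     (\<forall>x\<in>carrier K. \<forall>S\<subseteq>carrier K. mult K x (Join K S) = Join K ((\<lambda>s. mult K x s) ` S)) \<and>
     (\<forall>x\<in>carrier K. \<forall>S\<subseteq>carrier K. mult K (Join K S) x = Join K ((\<lambda>s. mult K s x) ` S)) \<and>
     unit K \<in> carrier K \<and>
     (\<forall>x\<in>carrier K. mult K (unit K) x = x \<and> mult K x (unit K) = x) \<and>
     (\<forall>x\<in>carrier K. star K x \<in> carrier K) \<and>
     (\<forall>x\<in>carrier K. star K (star K x) = x) \<and>
     (\<forall>x\<in>carrier K. \<forall>y\<in>carrier K. star K (mult K x y) = mult K (star K y) (star K x)) \<and>
     (\<forall>S\<subseteq>carrier K. star K (Join K S) = Join K (star K ` S))"

definition ida :: "('a, 'b) ida_struct_scheme \<Rightarrow> bool" where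
  "ida K \<longleftrightarrow> inv_quantale K \<and>
     (\<forall>x\<in>carrier K. neg K x \<in> carrier K) \<and>
     (\<forall>x\<in>carrier K. \<forall>y\<in>carrier K.
        neg K (mult K x (neg K (neg K y))) = neg K (mult K x y)) \<and>
     (\<forall>S\<subseteq>carrier K. neg K (Join K ((\<lambda>x. neg K (neg K x)) ` S)) = neg K (Join K S)) \<and>
     (\<forall>x\<in>carrier K. star K (neg K x) = neg K x) \<and>
     (\<forall>x\<in>carrier K. \<forall>y\<in>carrier K.
        neg K (neg K (mult K (neg K (neg K x)) y)) =
        neg K (Join K {neg K x, neg K (Join K {neg K x, y})}))"

definition tests :: "('a, 'b) ida_struct_scheme \<Rightarrow> 'a set" where
  "tests K = neg K ` carrier K"

definition tjoin :: "('a, 'b) ida_struct_scheme \<Rightarrow> 'a set \<Rightarrow> 'a" where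
  "tjoin K W = neg K (neg K (Join K W))"

definition tle :: "('a, 'b) ida_struct_scheme \<Rightarrow> 'a \<Rightarrow> 'a \<Rightarrow> bool" where
  "tle K k l \<longleftrightarrow> tjoin K {k, l} = l"

definition bullet :: "('a, 'b) ida_struct_scheme \<Rightarrow> 'a \<Rightarrow> 'a \<Rightarrow> 'a" where
  "bullet K k v = neg K (neg K (mult K k v))"

definition act_equiv :: "('a, 'b) ida_struct_scheme \<Rightarrow> 'a \<Rightarrow> 'a \<Rightarrow> bool" where
  "act_equiv K k l \<longleftrightarrow> (\<forall>w\<in>tests K. bullet K k w = bullet K l w)"

definition ida_hom :: "('a, 'b) ida_struct_scheme \<Rightarrow> ('c, 'd) ida_struct_scheme \<Rightarrow> ('a \<Rightarrow> 'c) \<Rightarrow> bool" where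
  "ida_hom K L f \<longleftrightarrow> ida K \<and> ida L \<and>
     (\<forall>x\<in>carrier K. f x \<in> carrier L) \<and>
     (\<forall>S\<subseteq>carrier K. f (Join K S) = Join L (f ` S)) \<and>
     (\<forall>x\<in>carrier K. \<forall>y\<in>carrier K. f (mult K x y) = mult L (f x) (f y)) \<and>
     (\<forall>x\<in>carrier K. f (star K x) = star L (f x)) \<and>
     f (unit K) = unit L \<and>
     (\<forall>x\<in>carrier K. f (neg K x) = neg L (f x))"

definition T1 :: "('a ida_struct \<Rightarrow> 'a set) \<Rightarrow> bool" where
  "T1 T \<longleftrightarrow> (\<forall>K. ida K \<longrightarrow>
     tests K \<subseteq> T K \<and> T K \<subseteq> carrier K \<and> unit K \<in> T K \<and>
     (\<forall>x\<in>T K. \<forall>y\<in>T K. mult K x y \<in> T K) \<and> (\<forall>x\<in>T K. star K x \<in> T K))"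

text \<open>(T4) together with functoriality on arrows: T(f) is the restriction of f,
  which must map T(K) into T(L).\<close>
definition T4 :: "('a ida_struct \<Rightarrow> 'a set) \<Rightarrow> bool" where
  "T4 T \<longleftrightarrow> (\<forall>K L f. ida_hom K L f \<longrightarrow> f ` T K \<subseteq> T L)"

definition T_oda :: "('a ida_struct \<Rightarrow> 'a set) \<Rightarrow> 'a ida_struct \<Rightarrow> bool" where
  "T_oda T K \<longleftrightarrow> ida K \<and>
     complete_oml (tests K) (tle K) (neg K) \<and>
     (\<forall>A. T K \<subseteq> A \<and> A \<subseteq> carrier K \<and>
          (\<forall>x\<in>A. \<forall>y\<in>A. mult K x y \<in> A) \<and> (\<forall>x\<in>A. star K x \<in> A) \<and>
          (\<forall>S\<subseteq>A. Join K S \<in> A) \<longrightarrow> A = carrier K) \<and>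
     (\<forall>S U. S \<subseteq> T K \<longrightarrow> U \<subseteq> T K \<longrightarrow> (Join K S = Join K U \<longleftrightarrow> S = U)) \<and>
     (\<forall>s\<in>T K. \<forall>t\<in>T K. s = t \<longleftrightarrow> act_equiv K s t)"

end

theory Submission
  imports Defs
begin

lemma join_union:
  assumes q: "inv_quantale K" and F: "\<forall>S\<in>F. S \<subseteq> carrier K"
  shows "Join K (Join K ` F) = Join K (\<Union>F)"
proof -
  have po: "partial_order_on' (carrier K) (qle K)"
   and lub: "\<And>S. S \<subseteq> carrier K \<Longrightarrow> is_lub (carrier K) (qle K) S (Join K S)"
    using q unfolding inv_quantale_def by auto
  have U: "\<Union>F \<subseteq> carrier K" using F by auto
  have JF: "Join K ` F \<subseteq> carrier K" using lub F unfolding is_lub_def by blast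
  have l1: "is_lub (carrier K) (qle K) (\<Union>F) (Join K (\<Union>F))" using lub U by blast
  have l2: "is_lub (carrier K) (qle K) (Join K ` F) (Join K (Join K ` F))" using lub JF by blast
  have a: "qle K (Join K (Join K ` F)) (Join K (\<Union>F))"
  proof -
    have "\<forall>w\<in>Join K ` F. qle K w (Join K (\<Union>F))"
    proof
      fix w assume "w \<in> Join K ` F"
      then obtain S where S: "S \<in> F" "w = Join K S" by blast
      have "is_lub (carrier K) (qle K) S (Join K S)" using lub F S by blast
      moreover have "\<forall>x\<in>S. qle K x (Join K (\<Union>F))" using l1 S unfolding is_lub_def by blast
      moreover have "Join K (\<Union>F) \<in> carrier K" using l1 unfolding is_lub_def by blast
      ultimately show "qle K w (Join K (\<Union>F))" using S unfolding is_lub_def by blast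
    qed
    then show ?thesis using l1 l2 unfolding is_lub_def by blast
  qed
  have b: "qle K (Join K (\<Union>F)) (Join K (Join K ` F))"
  proof -
    have "\<forall>x\<in>\<Union>F. qle K x (Join K (Join K ` F))"
    proof
      fix x assume "x \<in> \<Union>F"
      then obtain S where S: "S \<in> F" "x \<in> S" by blast
      have ls: "is_lub (carrier K) (qle K) S (Join K S)" using lub F S by blast
      have "qle K x (Join K S)" using ls S unfolding is_lub_def by blast
      moreover have "qle K (Join K S) (Join K (Join K ` F))" using l2 S unfolding is_lub_def by blast
      moreover have "x \<in> carrier K" using S F by blast
      moreover have "Join K S \<in> carrier K" using ls unfolding is_lub_def by blast
      moreover have "Join K (Join K ` F) \<in> carrier K" using l2 unfolding is_lub_def by blast
      ultimately show "qle K x (Join K (Join K ` F))" using po unfolding partial_order_on'_def by blast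
    qed
    then show ?thesis using l1 l2 unfolding is_lub_def by blast
  qed
  have c1: "Join K (Join K ` F) \<in> carrier K" "Join K (\<Union>F) \<in> carrier K"
    using l1 l2 unfolding is_lub_def by blast+
  have anti: "\<forall>x\<in>carrier K. \<forall>y\<in>carrier K. qle K x y \<and> qle K y x \<longrightarrow> x = y"
    using po unfolding partial_order_on'_def by blast
  show ?thesis using anti[rule_format, OF c1] a b by simp
qed

theorem lemma4p3:
  fixes T :: "'a ida_struct \<Rightarrow> 'a set" and K :: "'a ida_struct"
  assumes "T1 T" and "T4 T"
    and "T_oda T K"
  shows "\<forall>k\<in>carrier K. \<exists>!S. S \<subseteq> T K \<and> k = Join K S"
proof -
  have ida: "ida K" using assms(3) unfolding T_oda_def by blast
  have q: "inv_quantale K" using ida unfolding ida_def by blast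
  have T1K: "T K \<subseteq> carrier K" "\<forall>x\<in>T K. \<forall>y\<in>T K. mult K x y \<in> T K" "\<forall>x\<in>T K. star K x \<in> T K"
    using assms(1) ida unfolding T1_def by auto
  have po: "partial_order_on' (carrier K) (qle K)"
   and lub: "\<And>S. S \<subseteq> carrier K \<Longrightarrow> is_lub (carrier K) (qle K) S (Join K S)"
   and mc: "\<forall>x\<in>carrier K. \<forall>y\<in>carrier K. mult K x y \<in> carrier K"
   and dl: "\<forall>x\<in>carrier K. \<forall>S\<subseteq>carrier K. mult K x (Join K S) = Join K ((\<lambda>s. mult K x s) ` S)"
   and dr: "\<forall>x\<in>carrier K. \<forall>S\<subseteq>carrier K. mult K (Join K S) x = Join K ((\<lambda>s. mult K s x) ` S)"
   and st: "\<forall>S\<subseteq>carrier K. star K (Join K S) = Join K (star K ` S)"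
    using q unfolding inv_quantale_def by auto
  have Jc: "\<And>S. S \<subseteq> carrier K \<Longrightarrow> Join K S \<in> carrier K" using lub unfolding is_lub_def by blast
  define A where "A = {x. \<exists>S. S \<subseteq> T K \<and> x = Join K S}"
  have TA: "T K \<subseteq> A"
  proof
    fix t assume t: "t \<in> T K"
    have "qle K t t" using po t T1K(1) unfolding partial_order_on'_def by blast
    then have "Join K {t} = t" unfolding qle_def by simp
    then have "{t} \<subseteq> T K \<and> t = Join K {t}" using t by simp
    then show "t \<in> A" unfolding A_def mem_Collect_eq by (rule exI)
  qed
  have AC: "A \<subseteq> carrier K"
  proof
    fix x assume "x \<in> A"
    then obtain S where "S \<subseteq> T K" "x = Join K S" unfolding A_def by blast
    then show "x \<in> carrier K" using Jc T1K(1) by simp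
  qed
  have AJ: "\<forall>X\<subseteq>A. Join K X \<in> A"
  proof (intro allI impI)
    fix X assume X: "X \<subseteq> A"
    define g where "g x = (SOME S. S \<subseteq> T K \<and> x = Join K S)" for x
    have g: "\<And>x. x \<in> X \<Longrightarrow> g x \<subseteq> T K \<and> x = Join K (g x)"
    proof -
      fix x assume "x \<in> X"
      then have "\<exists>S. S \<subseteq> T K \<and> x = Join K S" using X unfolding A_def by blast
      then show "g x \<subseteq> T K \<and> x = Join K (g x)" unfolding g_def by (rule someI_ex)
    qed
    have "X = Join K ` (g ` X)" using g by force
    then have "Join K X = Join K (\<Union>(g ` X))"
      using join_union[OF q, of "g ` X"] g T1K(1) by force
    moreover have "\<Union>(g ` X) \<subseteq> T K" using g by blast
    ultimately have "\<Union>(g ` X) \<subseteq> T K \<and> Join K X = Join K (\<Union>(g ` X))" by simp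
    then show "Join K X \<in> A" unfolding A_def mem_Collect_eq by (rule exI)
  qed
  have AM: "\<forall>x\<in>A. \<forall>y\<in>A. mult K x y \<in> A"
  proof (intro ballI)
    fix x y assume "x \<in> A" "y \<in> A"
    then obtain S U where S: "S \<subseteq> T K" "x = Join K S" and U: "U \<subseteq> T K" "y = Join K U"
      unfolding A_def by blast
    have SC: "S \<subseteq> carrier K" and UC: "U \<subseteq> carrier K" using S U T1K(1) by auto
    have "mult K x y = Join K ((\<lambda>s. mult K s y) ` S)" using dr S(2) SC Jc[OF UC] U(2) by simp
    also have "(\<lambda>s. mult K s y) ` S = Join K ` ((\<lambda>s. (\<lambda>u. mult K s u) ` U) ` S)"
    proof -
      have "\<And>s. s \<in> S \<Longrightarrow> mult K s y = Join K ((\<lambda>u. mult K s u) ` U)"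
        using dl UC SC U(2) by auto
      then have "(\<lambda>s. mult K s y) ` S = (\<lambda>s. Join K ((\<lambda>u. mult K s u) ` U)) ` S"
        by (rule image_cong[OF refl])
      then show ?thesis by (simp only: image_image)
    qed
    also have "Join K \<dots> = Join K (\<Union>((\<lambda>s. (\<lambda>u. mult K s u) ` U) ` S))"
      by (rule join_union[OF q]) (use mc SC UC in blast)
    finally have "mult K x y = Join K (\<Union>((\<lambda>s. (\<lambda>u. mult K s u) ` U) ` S))" .
    moreover have "\<Union>((\<lambda>s. (\<lambda>u. mult K s u) ` U) ` S) \<subseteq> T K" using T1K(2) S U by blast
    ultimately have "\<Union>((\<lambda>s. (\<lambda>u. mult K s u) ` U) ` S) \<subseteq> T K \<and> mult K x y = Join K (\<Union>((\<lambda>s. (\<lambda>u. mult K s u) ` U) ` S))" by simp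
    then show "mult K x y \<in> A" unfolding A_def mem_Collect_eq by (rule exI)
  qed
  have AS: "\<forall>x\<in>A. star K x \<in> A"
  proof
    fix x assume "x \<in> A"
    then obtain S where S: "S \<subseteq> T K" "x = Join K S" unfolding A_def by blast
    have "star K x = Join K (star K ` S)" using st S T1K(1) by auto
    moreover have "star K ` S \<subseteq> T K" using S T1K(3) by blast
    ultimately have "star K ` S \<subseteq> T K \<and> star K x = Join K (star K ` S)" by simp
    then show "star K x \<in> A" unfolding A_def mem_Collect_eq by (rule exI)
  qed
  have "A = carrier K" using assms(3) TA AC AM AS AJ unfolding T_oda_def by blast
  moreover have uniq: "\<forall>S U. S \<subseteq> T K \<longrightarrow> U \<subseteq> T K \<longrightarrow> (Join K S = Join K U \<longleftrightarrow> S = U)"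
    using assms(3) unfolding T_oda_def by blast
  show ?thesis
  proof
    fix k assume "k \<in> carrier K"
    then have "k \<in> A" using \<open>A = carrier K\<close> by simp
    then obtain S where S: "S \<subseteq> T K" "k = Join K S" unfolding A_def by blast
    show "\<exists>!S. S \<subseteq> T K \<and> k = Join K S"
    proof (rule ex1I[of _ S])
      show "S \<subseteq> T K \<and> k = Join K S" using S by simp
      fix U assume U: "U \<subseteq> T K \<and> k = Join K U"
      then have "Join K U = Join K S" using S by simp
      then show "U = S" using uniq U S(1) by blast
    qed
  qed
qed

end
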